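(* Let $N\ge1$, $\lambda_0,\dots,\lambda_N>0$ and $\gamma_0,\dots,\gamma_N\in\mathbb{C}$ distinct, and let $$p(\eta,\zeta)=\sum_{i=0}^N\lambda_i^2\prod_{\substack{j=0\\ j\neq i}}^N(\zeta-\gamma_j)(1+\eta\bar\gamma_j)$$ be the polynomial defining the spectral curve of the corresponding JNR monopole. Then the holomorphic sphere of this JNR monopole is (up to the action of $U(N+1)$) $$q(z)=\Big[\frac{\lambda_0}{z-\gamma_0}:\frac{\lambda_1}{z-\gamma_1}:\cdots:\frac{\lambda_N}{z-\gamma_N}\Big],$$ i.e. $q:\mathbb{P}^1\to\mathbb{P}^N$ is a full holomorphic map of degree $N$, and its lift $\tilde q(z)=\big(\lambda_i\prod_{j\neq i}(z-\gamma_j)\big)_{i=0}^N$ satisfies $$\langle\tilde q(-1/\bar\eta),\tilde q(\zeta)\rangle=\frac{(-1)^N}{\eta^N}\,p(\eta,\zeta).$$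
   Context: $\langle\cdot,\cdot\rangle$ is the standard Hermitian inner product on $\mathbb{C}^{N+1}$, conjugate-linear in the first factor. A holomorphic map $q:\mathbb{P}^1\to\mathbb{P}^N$ is full if its image is not contained in a proper projective subspace. For a charge $N$ hyperbolic monopole whose spectral curve is defined by a polynomial $p$ normalized so that $p(\eta,\zeta)=(-1)^N\eta^N\zeta^N\overline{p(-1/\bar\zeta,-1/\bar\eta)}$ and $p(-1/\bar\zeta,\zeta)\bar\zeta^N>0$ (the JNR polynomial above satisfies these), the holomorphic sphere (Murray–Norbury–Singer) is the degree $N$ full holomorphic map $q:\mathbb{P}^1\to\mathbb{P}^N$, unique up to the action of $U(N+1)$, admitting a polynomial lift $\tilde q$ with $\langle\tilde q(-1/\bar\eta),\tilde q(\zeta)\rangle=(-1)^N\eta^{-N}p(\eta,\zeta)$; its pullback of the Kähler form of $\mathbb{P}^N$ is the curvature of the limiting connection at infinity. *)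

theory Defs
  imports "HOL-Analysis.Analysis" "HOL-Computational_Algebra.Polynomial"
begin

text \<open>A holomorphic map P^1 -> P^N is represented by a polynomial lift
  f 0, ..., f N :: complex poly (homogeneous coordinates of the image of
  the affine point z, the point at infinity being handled by homogenising
  to degree N).\<close>

definition no_common_zero :: "nat \<Rightarrow> (nat \<Rightarrow> complex poly) \<Rightarrow> bool" where
  "no_common_zero N f \<longleftrightarrow> (\<forall>z. \<exists>i\<le>N. poly (f i) z \<noteq> 0)"

text \<open>Degree of the map defined by a lift without common zeros: the maximum
  degree of the component polynomials (no common zero at infinity after
  homogenising to this degree).\<close>
definition lift_degree :: "nat \<Rightarrow> (nat \<Rightarrow> complex poly) \<Rightarrow> nat" where
  "lift_degree N f = Max ((\<lambda>i. degree (f i)) ` {0..N})"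

text \<open>Full: the image is not contained in a proper projective subspace, i.e.
  no nontrivial linear form vanishes identically on the lift.\<close>
definition full_lift :: "nat \<Rightarrow> (nat \<Rightarrow> complex poly) \<Rightarrow> bool" where
  "full_lift N f \<longleftrightarrow>
     (\<forall>c :: nat \<Rightarrow> complex. (\<Sum>i\<le>N. smult (c i) (f i)) = 0 \<longrightarrow> (\<forall>i\<le>N. c i = 0))"

definition herm :: "nat \<Rightarrow> (nat \<Rightarrow> complex) \<Rightarrow> (nat \<Rightarrow> complex) \<Rightarrow> complex" where
  "herm N u v = (\<Sum>i\<le>N. cnj (u i) * v i)"

definition jnr_poly :: "nat \<Rightarrow> (nat \<Rightarrow> real) \<Rightarrow> (nat \<Rightarrow> complex) \<Rightarrow> complex \<Rightarrow> complex \<Rightarrow> complex" where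
  "jnr_poly N lam gam \<eta> \<zeta> =
     (\<Sum>i\<le>N. (complex_of_real (lam i))\<^sup>2 *
        (\<Prod>j\<in>{0..N} - {i}. (\<zeta> - gam j) * (1 + \<eta> * cnj (gam j))))"

definition jnr_lift :: "nat \<Rightarrow> (nat \<Rightarrow> real) \<Rightarrow> (nat \<Rightarrow> complex) \<Rightarrow> nat \<Rightarrow> complex poly" where
  "jnr_lift N lam gam i = smult (complex_of_real (lam i)) (\<Prod>j\<in>{0..N} - {i}. [:- gam j, 1:])"

end

theory Submission
  imports Defs
begin

lemma lift_poly: "poly (jnr_lift N lam gam i) z = complex_of_real (lam i) * (\<Prod>j\<in>{0..N} - {i}. z - gam j)"
  by (simp add: jnr_lift_def poly_prod)

lemma lift_at_other:
  assumes "k \<le> N" "i \<noteq> k"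
  shows "poly (jnr_lift N lam gam i) (gam k) = 0"
proof -
  have "(\<Prod>j\<in>{0..N} - {i}. gam k - gam j) = 0"
    by (rule prod_zero) (use assms in auto)
  then show ?thesis by (simp add: lift_poly)
qed

lemma lift_at_self:
  assumes "k \<le> N" "lam k > 0" "inj_on gam {0..N}"
  shows "poly (jnr_lift N lam gam k) (gam k) \<noteq> 0"
proof -
  have "(\<Prod>j\<in>{0..N} - {k}. gam k - gam j) \<noteq> 0"
  proof -
    have "\<forall>j\<in>{0..N} - {k}. gam k - gam j \<noteq> 0"
      using assms(1,3) by (auto simp: inj_on_def)
    then show ?thesis by simp
  qed
  then show ?thesis using assms(2) by (simp add: lift_poly)
qed

lemma lift_degree_i:
  assumes "i \<le> N" "lam i > 0"
  shows "degree (jnr_lift N lam gam i) = N"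
proof -
  have "degree (\<Prod>j\<in>{0..N} - {i}. [:- gam j, 1:]) = (\<Sum>j\<in>{0..N} - {i}. degree [:- gam j, 1:])"
    by (rule degree_prod_eq_sum_degree) auto
  also have "\<dots> = card ({0..N} - {i})" by simp
  also have "\<dots> = N" using assms(1) by simp
  finally show ?thesis using assms(2) by (simp add: jnr_lift_def)
qed

theorem mainTheorem5:
  fixes N :: nat and lam :: "nat \<Rightarrow> real" and gam :: "nat \<Rightarrow> complex"
  assumes "N \<ge> 1"
    and "\<forall>i\<le>N. lam i > 0"
    and "inj_on gam {0..N}"
  shows "(\<forall>z. (\<forall>j\<le>N. z \<noteq> gam j) \<longrightarrow>
            (\<forall>i\<le>N. poly (jnr_lift N lam gam i) z =
               (\<Prod>j\<le>N. z - gam j) * (complex_of_real (lam i) / (z - gam i))))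
       \<and> no_common_zero N (jnr_lift N lam gam)
       \<and> lift_degree N (jnr_lift N lam gam) = N
       \<and> full_lift N (jnr_lift N lam gam)
       \<and> (\<forall>\<eta> \<zeta>. \<eta> \<noteq> 0 \<longrightarrow>
            herm N (\<lambda>i. poly (jnr_lift N lam gam i) (- 1 / cnj \<eta>))
                   (\<lambda>i. poly (jnr_lift N lam gam i) \<zeta>)
            = (-1) ^ N / \<eta> ^ N * jnr_poly N lam gam \<eta> \<zeta>)"
proof (intro conjI allI impI)
  fix z i assume z: "\<forall>j\<le>N. z \<noteq> gam j" and i: "i \<le> N"
  have "(\<Prod>j\<le>N. z - gam j) = (z - gam i) * (\<Prod>j\<in>{0..N} - {i}. z - gam j)"
  proof -
    have "{..N} = insert i ({0..N} - {i})" using i by auto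
    then show ?thesis by (simp add: prod.insert_remove)
  qed
  moreover have "z - gam i \<noteq> 0" using z i by auto
  ultimately show "poly (jnr_lift N lam gam i) z =
               (\<Prod>j\<le>N. z - gam j) * (complex_of_real (lam i) / (z - gam i))"
    by (simp add: lift_poly)
next
  show "no_common_zero N (jnr_lift N lam gam)"
    unfolding no_common_zero_def
  proof
    fix z
    show "\<exists>i\<le>N. poly (jnr_lift N lam gam i) z \<noteq> 0"
    proof (cases "\<exists>k\<le>N. z = gam k")
      case True
      then obtain k where "k \<le> N" "z = gam k" by auto
      then show ?thesis using lift_at_self[of k N lam gam] assms by auto
    next
      case False
      have "(\<Prod>j\<in>{0..N} - {0}. z - gam j) \<noteq> 0" using False by auto
      then have "poly (jnr_lift N lam gam 0) z \<noteq> 0"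
        using assms(2) by (auto simp: lift_poly)
      then show ?thesis by auto
    qed
  qed
next
  have "(\<lambda>i. degree (jnr_lift N lam gam i)) ` {0..N} = {N}"
    using lift_degree_i assms(2) by auto
  then show "lift_degree N (jnr_lift N lam gam) = N"
    by (simp add: lift_degree_def)
next
  show "full_lift N (jnr_lift N lam gam)"
    unfolding full_lift_def
  proof (intro allI impI)
    fix c :: "nat \<Rightarrow> complex" and k
    assume h: "(\<Sum>i\<le>N. smult (c i) (jnr_lift N lam gam i)) = 0" and k: "k \<le> N"
    have "0 = poly (\<Sum>i\<le>N. smult (c i) (jnr_lift N lam gam i)) (gam k)" using h by simp
    also have "\<dots> = (\<Sum>i\<le>N. c i * poly (jnr_lift N lam gam i) (gam k))"
      by (simp add: poly_sum)
    also have "\<dots> = c k * poly (jnr_lift N lam gam k) (gam k)"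
      using k by (subst sum.remove[of _ k]) (auto simp: lift_at_other[OF k])
    finally show "c k = 0" using lift_at_self[of k N lam gam] assms k by auto
  qed
next
  fix \<eta> \<zeta> :: complex assume eta: "\<eta> \<noteq> 0"
  have fac: "cnj (- 1 / cnj \<eta> - gam j) * (\<zeta> - gam j) = (-1/\<eta>) * ((\<zeta> - gam j) * (1 + \<eta> * cnj (gam j)))" for j
    using eta by (simp add: field_simps)
  have trm: "cnj (poly (jnr_lift N lam gam i) (- 1 / cnj \<eta>)) * poly (jnr_lift N lam gam i) \<zeta>
     = (-1) ^ N / \<eta> ^ N * ((complex_of_real (lam i))\<^sup>2 *
        (\<Prod>j\<in>{0..N} - {i}. (\<zeta> - gam j) * (1 + \<eta> * cnj (gam j))))" if i: "i \<le> N" for i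
  proof -
    have "cnj (poly (jnr_lift N lam gam i) (- 1 / cnj \<eta>)) * poly (jnr_lift N lam gam i) \<zeta>
      = (complex_of_real (lam i))\<^sup>2 * (\<Prod>j\<in>{0..N} - {i}. cnj (- 1 / cnj \<eta> - gam j) * (\<zeta> - gam j))"
      by (simp add: lift_poly cnj_prod prod.distrib power2_eq_square)
    also have "\<dots> = (complex_of_real (lam i))\<^sup>2 * ((-1/\<eta>) ^ card ({0..N} - {i}) *
        (\<Prod>j\<in>{0..N} - {i}. (\<zeta> - gam j) * (1 + \<eta> * cnj (gam j))))"
    proof -
      have "(\<Prod>j\<in>{0..N} - {i}. cnj (- 1 / cnj \<eta> - gam j) * (\<zeta> - gam j))
          = (\<Prod>j\<in>{0..N} - {i}. (-1/\<eta>) * ((\<zeta> - gam j) * (1 + \<eta> * cnj (gam j))))"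
        by (rule prod.cong) (simp_all only: fac)
      also have "\<dots> = (-1/\<eta>) ^ card ({0..N} - {i}) *
        (\<Prod>j\<in>{0..N} - {i}. (\<zeta> - gam j) * (1 + \<eta> * cnj (gam j)))"
        by (simp only: prod.distrib prod_constant)
      finally show ?thesis by simp
    qed
    also have "card ({0..N} - {i}) = N" using i by simp
    moreover have "(-1/\<eta>) ^ N = (-1) ^ N / \<eta> ^ N" by (rule power_divide)
    ultimately show ?thesis by simp
  qed
  show "herm N (\<lambda>i. poly (jnr_lift N lam gam i) (- 1 / cnj \<eta>))
                   (\<lambda>i. poly (jnr_lift N lam gam i) \<zeta>)
            = (-1) ^ N / \<eta> ^ N * jnr_poly N lam gam \<eta> \<zeta>"
    unfolding herm_def jnr_poly_def sum_distrib_left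
    by (rule sum.cong[OF refl], rule trm) simp
qed

end
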